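(* Let $\Gamma$ be a Deza graph with parameters $(n,k,k-1,a)$, $k>1$, $\beta=1$. Let $x,y$ be two $A$-vertices with $\{x,x_b\}\ne\{y,y_b\}$. Then either all possible edges between $\{x,x_b\}$ and $\{y,y_b\}$ are present in $\Gamma$, or there are no such edges.
   Context: A Deza graph with parameters $(n,k,b,a)$, $a\le b$, is a $k$-regular graph on $n$ vertices in which any two distinct vertices have $a$ or $b$ common neighbours; $\beta$ is the number of vertices $u\ne v$ with exactly $b$ common neighbours with a given vertex $v$ (independent of $v$). Since $\beta=1$, for each vertex $x$ let $x_b$ denote the unique vertex having $b=k-1$ common neighbours with $x$. A vertex $x$ is an $A$-vertex if $x$ is adjacent to $x_b$, and an $NA$-vertex otherwise. *)

theory Defs
  imports Main
begin

definition common_nbrs :: "'a set \<Rightarrow> ('a \<Rightarrow> 'a \<Rightarrow> bool) \<Rightarrow> 'a \<Rightarrow> 'a \<Rightarrow> nat" where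
  "common_nbrs V E x y = card {z \<in> V. E x z \<and> E y z}"

definition deza_graph :: "'a set \<Rightarrow> ('a \<Rightarrow> 'a \<Rightarrow> bool) \<Rightarrow> nat \<Rightarrow> nat \<Rightarrow> nat \<Rightarrow> nat \<Rightarrow> bool" where
  "deza_graph V E n k b a \<longleftrightarrow>
     finite V \<and> card V = n \<and>
     (\<forall>x y. E x y \<longrightarrow> x \<in> V \<and> y \<in> V) \<and>
     (\<forall>x y. E x y \<longrightarrow> E y x) \<and>
     (\<forall>x. \<not> E x x) \<and>
     (\<forall>x \<in> V. card {y \<in> V. E x y} = k) \<and>
     a \<le> b \<and>
     (\<forall>x \<in> V. \<forall>y \<in> V. x \<noteq> y \<longrightarrow> common_nbrs V E x y = a \<or> common_nbrs V E x y = b)"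

definition deza_beta :: "'a set \<Rightarrow> ('a \<Rightarrow> 'a \<Rightarrow> bool) \<Rightarrow> nat \<Rightarrow> nat \<Rightarrow> bool" where
  "deza_beta V E b \<beta> \<longleftrightarrow> (\<forall>v \<in> V. card {u \<in> V. u \<noteq> v \<and> common_nbrs V E u v = b} = \<beta>)"

text \<open>x_b: the unique vertex having b common neighbours with x (meaningful when beta = 1).\<close>
definition b_vertex :: "'a set \<Rightarrow> ('a \<Rightarrow> 'a \<Rightarrow> bool) \<Rightarrow> nat \<Rightarrow> 'a \<Rightarrow> 'a" where
  "b_vertex V E b x = (THE y. y \<in> V \<and> y \<noteq> x \<and> common_nbrs V E x y = b)"

definition A_vertex :: "'a set \<Rightarrow> ('a \<Rightarrow> 'a \<Rightarrow> bool) \<Rightarrow> nat \<Rightarrow> 'a \<Rightarrow> bool" where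
  "A_vertex V E b x \<longleftrightarrow> x \<in> V \<and> E x (b_vertex V E b x)"

end

theory Submission
  imports Defs
begin

lemma cn_sym: "common_nbrs V E x y = common_nbrs V E y x"
  unfolding common_nbrs_def by (metis (no_types, lifting) Collect_cong)

lemma uniq_b:
  assumes "deza_beta V E b 1" "v \<in> V"
    and "u1 \<in> V" "u1 \<noteq> v" "common_nbrs V E u1 v = b"
    and "u2 \<in> V" "u2 \<noteq> v" "common_nbrs V E u2 v = b"
  shows "u1 = u2"
proof -
  have "card {u \<in> V. u \<noteq> v \<and> common_nbrs V E u v = b} = 1"
    using assms unfolding deza_beta_def by blast
  then obtain c where c: "{u \<in> V. u \<noteq> v \<and> common_nbrs V E u v = b} = {c}"
    using card_1_singletonE by blast
  have "u1 \<in> {c}" "u2 \<in> {c}" using assms by (simp_all add: c[symmetric])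
  thus ?thesis by simp
qed

lemma bv_eq:
  assumes "deza_beta V E b 1" "v \<in> V"
    and "u \<in> V" "u \<noteq> v" "common_nbrs V E v u = b"
  shows "b_vertex V E b v = u"
  unfolding b_vertex_def
proof (rule the_equality)
  show "u \<in> V \<and> u \<noteq> v \<and> common_nbrs V E v u = b" using assms by simp
  fix y assume "y \<in> V \<and> y \<noteq> v \<and> common_nbrs V E v y = b"
  then show "y = u" using uniq_b[OF assms(1,2), of y u] assms cn_sym by metis
qed

lemma A_facts:
  assumes D: "deza_graph V E n k (k - 1) a" and B: "deza_beta V E (k - 1) 1"
    and A: "A_vertex V E (k - 1) x"
  shows "x \<in> V" "b_vertex V E (k - 1) x \<in> V" "b_vertex V E (k - 1) x \<noteq> x"
    "E x (b_vertex V E (k - 1) x)"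
    "common_nbrs V E x (b_vertex V E (k - 1) x) = k - 1"
    "\<And>z. z \<noteq> x \<Longrightarrow> z \<noteq> b_vertex V E (k - 1) x \<Longrightarrow> E x z = E (b_vertex V E (k - 1) x) z"
proof -
  define x' where "x' = b_vertex V E (k - 1) x"
  have fin: "finite V" and EV: "\<And>p q. E p q \<Longrightarrow> p \<in> V \<and> q \<in> V"
    and sym: "\<And>p q. E p q \<Longrightarrow> E q p" and irr: "\<And>p. \<not> E p p"
    and deg: "\<And>p. p \<in> V \<Longrightarrow> card {q \<in> V. E p q} = k"
    using D unfolding deza_graph_def by blast+
  have xV: "x \<in> V" and Exx': "E x x'" using A unfolding A_vertex_def x'_def by auto
  have x'V: "x' \<in> V" using EV Exx' by blast
  have ne: "x' \<noteq> x" using Exx' irr by blast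
  have "card {u \<in> V. u \<noteq> x \<and> common_nbrs V E u x = k - 1} = 1"
    using B xV unfolding deza_beta_def by blast
  then obtain c where c: "{u \<in> V. u \<noteq> x \<and> common_nbrs V E u x = k - 1} = {c}"
    using card_1_singletonE by blast
  have cprop: "c \<in> V" "c \<noteq> x" "common_nbrs V E x c = k - 1"
  proof -
    have "c \<in> {u \<in> V. u \<noteq> x \<and> common_nbrs V E u x = k - 1}" using c by simp
    then show "c \<in> V" "c \<noteq> x" "common_nbrs V E x c = k - 1" using cn_sym[of V E x c] by auto
  qed
  have "b_vertex V E (k - 1) x = c" using bv_eq[OF B xV cprop] .
  hence cn: "common_nbrs V E x x' = k - 1" using cprop x'_def by simp
  let ?S = "{z \<in> V. E x z \<and> E x' z}"
  have S1: "?S \<subseteq> {q \<in> V. E x q} - {x'}" using irr by auto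
  have S2: "?S \<subseteq> {q \<in> V. E x' q} - {x}" using irr by auto
  have cS: "card ?S = k - 1" using cn unfolding common_nbrs_def .
  have c1: "card ({q \<in> V. E x q} - {x'}) = k - 1"
    using deg[OF xV] Exx' x'V fin by (simp add: card_Diff_singleton)
  have c2: "card ({q \<in> V. E x' q} - {x}) = k - 1"
    using deg[OF x'V] sym[OF Exx'] xV fin by (simp add: card_Diff_singleton)
  have e1: "?S = {q \<in> V. E x q} - {x'}"
    by (rule card_subset_eq) (use fin S1 cS c1 in auto)
  have e2: "?S = {q \<in> V. E x' q} - {x}"
    by (rule card_subset_eq) (use fin S2 cS c2 in auto)
  show "x \<in> V" "b_vertex V E (k - 1) x \<in> V" "b_vertex V E (k - 1) x \<noteq> x"
    "E x (b_vertex V E (k - 1) x)"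
    "common_nbrs V E x (b_vertex V E (k - 1) x) = k - 1"
    using xV x'V ne Exx' cn x'_def by auto
  fix z assume z: "z \<noteq> x" "z \<noteq> b_vertex V E (k - 1) x"
  show "E x z = E (b_vertex V E (k - 1) x) z"
  proof -
    have "E x z \<longleftrightarrow> z \<in> {q \<in> V. E x q} - {x'}" using z EV x'_def by auto
    also have "\<dots> \<longleftrightarrow> z \<in> {q \<in> V. E x' q} - {x}" using e1 e2 by simp
    also have "\<dots> \<longleftrightarrow> E x' z" using z EV by auto
    finally show ?thesis using x'_def by simp
  qed
qed

theorem lemma3:
  fixes V :: "'a set" and E :: "'a \<Rightarrow> 'a \<Rightarrow> bool" and n k a :: nat and x y :: 'a
  assumes "deza_graph V E n k (k - 1) a"
    and "k > 1"
    and "deza_beta V E (k - 1) 1"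
    and "A_vertex V E (k - 1) x" and "A_vertex V E (k - 1) y"
    and "{x, b_vertex V E (k - 1) x} \<noteq> {y, b_vertex V E (k - 1) y}"
  shows "(\<forall>u \<in> {x, b_vertex V E (k - 1) x}. \<forall>w \<in> {y, b_vertex V E (k - 1) y}. E u w)
       \<or> (\<forall>u \<in> {x, b_vertex V E (k - 1) x}. \<forall>w \<in> {y, b_vertex V E (k - 1) y}. \<not> E u w)"
proof -
  define x' where "x' = b_vertex V E (k - 1) x"
  define y' where "y' = b_vertex V E (k - 1) y"
  note X = A_facts[OF assms(1,3,4), folded x'_def]
  note Y = A_facts[OF assms(1,3,5), folded y'_def]
  note B = assms(3)
  have sym: "\<And>p q. E p q \<Longrightarrow> E q p" using assms(1) unfolding deza_graph_def by blast
  have ne: "{x, x'} \<noteq> {y, y'}" using assms(6) x'_def y'_def by simp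
  have bx': "b_vertex V E (k - 1) x' = x"
    using bv_eq[OF B X(2) X(1)] X(3) X(5) cn_sym by metis
  have by': "b_vertex V E (k - 1) y' = y"
    using bv_eq[OF B Y(2) Y(1)] Y(3) Y(5) cn_sym by metis
  have d1: "y \<noteq> x" using ne x'_def y'_def by auto
  have d2: "y \<noteq> x'" using ne bx' y'_def by auto
  have d3: "y' \<noteq> x"
  proof
    assume h: "y' = x"
    have "b_vertex V E (k - 1) x = y" using h by' by simp
    thus False using ne h x'_def by auto
  qed
  have d4: "y' \<noteq> x'"
  proof
    assume h: "y' = x'"
    have "y = x" using uniq_b[OF B X(2) Y(1) _ _ X(1) _ _] Y(3) Y(5) X(3) X(5) h cn_sym
      by metis
    thus False using d1 by simp
  qed
  have 1: "E x y = E x' y" using X(6) d1 d2 by simp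
  have 2: "E x y' = E x' y'" using X(6) d3 d4 by simp
  have 3: "E y x = E y' x" using Y(6) d1 d3 by auto
  have 4: "E y x' = E y' x'" using Y(6) d2 d4 by auto
  have s: "\<And>p q. E p q = E q p" using sym by blast
  have "E x y = E x y'" "E x y = E x' y'" using 1 2 3 4 s by metis+
  then show ?thesis using 1 x'_def y'_def by auto
qed

end
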